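(* Fix $\alpha\in\{\text{rotor routing},\ \text{Bernardi}\}$, and for a ribbon graph $(H,\sigma)$ and $u\in V(H)$ write $\alpha_u^{H}:\operatorname{Pic}^0(H)\times\mathcal T(H)\to\mathcal T(H)$ for the corresponding sandpile torsor with basepoint $u$. There exist ribbon graphs $(G,\rho)$ and $(G',\rho')$ of genera $g$ and $g'$, with $V(G)=V(G')$, together with a bijection $\varphi:\mathcal T(G)\to\mathcal T(G')$ and a group isomorphism $\gamma:\operatorname{Pic}^0(G)\to\operatorname{Pic}^0(G')$, such that for every vertex $v\in V(G)$, every $S\in\operatorname{Pic}^0(G)$ and every $T\in\mathcal T(G)$, $$\varphi\big(\alpha_v^{G}(S,T)\big)=\alpha_v^{G'}\big(\gamma(S),\varphi(T)\big),$$ and such that $g\neq g'$.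
   Context: Graphs are finite and connected, may have multiple edges, and have no loops. $\mathcal T(G)$ is the set of spanning trees of $G$ (as subsets of $E(G)$). A ribbon graph $(G,\rho)$ is a graph $G$ together with, for each vertex $u$, a cyclic order $\rho_u$ on the edges incident to $u$. $\operatorname{Div}^0(G)$ is the group of integer vectors $\sum_u n_u u$ with $\sum n_u=0$ (chip configurations); firing a vertex $u$ moves one chip from $u$ along each edge incident to $u$; $\operatorname{Pic}^0(G)=\operatorname{Div}^0(G)/\operatorname{im}(\Delta)$, where $\Delta$ is the graph Laplacian, i.e. two degree-zero divisors are equivalent iff they differ by an integer combination of firings. More generally $\operatorname{Pic}^k(G)$ is the set of degree-$k$ divisors modulo the same equivalence. Rotor routing torsor $r_v$ (basepoint $v$): for $S\in\operatorname{Pic}^0(G)$ and $T\in\mathcal T(G)$, choose a representative of $S$ with nonnegative chips at every vertex other than $v$; orient $T$ towards $v$, so each $u\neq v$ has one outgoing edge (its rotor). While some $u\neq v$ has a positive number of chips, pick such a $u$, advance its rotor to the next edge in $\rho_u$, and send one chip from $u$ along this new rotor edge to its other endpoint. When all vertices other than $v$ have zero chips, the rotors (unoriented) form a spanning tree $r_v(S,T)$; this is independent of all choices and defines a free transitive action. Bernardi torsor $\beta_v$: an edge $e$ with endpoints $u_1,u_2$ has half-edges $(e,u_1),(e,u_2)$. For $T\in\mathcal T(G)$, fix an edge $e_0$ incident to $v$ and start at the half-edge $(e_0,v)$. At current half-edge $(e',v')$: if $e'\in T$, let $w'$ be the other endpoint of $e'$ and move to $(e'',w')$ where $e''$ follows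 $e'$ in $\rho_{w'}$; if $e'\notin T$, move to $(\tilde e,v')$ where $\tilde e$ follows $e'$ in $\rho_{v'}$, and place a chip on $v'$ if the other half-edge of $e'$ has not yet been visited. Stop on returning to $(e_0,v)$. The resulting divisor $D_T$ has degree $|E(G)|-|V(G)|+1=:k$; the classes $[D_T]\in\operatorname{Pic}^k(G)$ are distinct for distinct $T$ and exhaust $\operatorname{Pic}^k(G)$, and $\beta_v(S,T)$ is the unique $T'$ with $[D_{T'}]=[D_T]+S$ (independent of $e_0$). Genus: a cycle (face) of $(G,\rho)$ is a closed walk such that whenever it enters a vertex $u$ along an edge $e$ it leaves along the edge following $e$ in $\rho_u$; equivalently an orbit of the permutation of half-edges sending (edge $e$ leaving $u$ towards $u'$) to (edge following $e$ in $\rho_{u'}$, leaving $u'$). With $\operatorname{cyc}(G,\rho)$ the number of cycles, the genus $g$ of $(G,\rho)$ (the genus of the associated closed surface) satisfies $2g=2-|V(G)|+|E(G)|-\operatorname{cyc}(G,\rho)$. *)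

theory Defs
  imports "HOL-Algebra.Group"
begin

record ('v,'e) mgraph =
  verts  :: "'v set"
  edges  :: "'e set"
  endpts :: "'e \<Rightarrow> 'v set"

definition other :: "('v,'e) mgraph \<Rightarrow> 'e \<Rightarrow> 'v \<Rightarrow> 'v" where
  "other G e u = (THE w. w \<in> endpts G e \<and> w \<noteq> u)"

definition inc :: "('v,'e) mgraph \<Rightarrow> 'v \<Rightarrow> 'e set" where
  "inc G u = {e \<in> edges G. u \<in> endpts G e}"

definition adj :: "('v,'e) mgraph \<Rightarrow> 'e set \<Rightarrow> 'v \<Rightarrow> 'v \<Rightarrow> bool" where
  "adj G F u w \<longleftrightarrow> (\<exists>e\<in>F. endpts G e = {u, w})"

definition connected_by :: "('v,'e) mgraph \<Rightarrow> 'e set \<Rightarrow> bool" where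
  "connected_by G F \<longleftrightarrow> (\<forall>u\<in>verts G. \<forall>w\<in>verts G. (adj G F)\<^sup>*\<^sup>* u w)"

definition graph :: "('v,'e) mgraph \<Rightarrow> bool" where
  "graph G \<longleftrightarrow> finite (verts G) \<and> finite (edges G) \<and> verts G \<noteq> {} \<and>
     (\<forall>e\<in>edges G. endpts G e \<subseteq> verts G \<and> card (endpts G e) = 2) \<and>
     connected_by G (edges G)"

text \<open>A ribbon structure: for each vertex u, rho u is a cyclic permutation of the edges
  incident to u (rho u e = the edge following e in the cyclic order at u).\<close>
definition ribbon_graph :: "('v,'e) mgraph \<Rightarrow> ('v \<Rightarrow> 'e \<Rightarrow> 'e) \<Rightarrow> bool" where
  "ribbon_graph G \<rho> \<longleftrightarrow> graph G \<and>
     (\<forall>u\<in>verts G. bij_betw (\<rho> u) (inc G u) (inc G u) \<and>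
        (\<forall>e\<in>inc G u. \<forall>f\<in>inc G u. \<exists>n. (\<rho> u ^^ n) e = f))"

text \<open>Spanning trees: connected spanning edge sets that are minimally connected
  (every edge is a bridge, i.e. acyclic).\<close>
definition spanning_trees :: "('v,'e) mgraph \<Rightarrow> 'e set set" where
  "spanning_trees G = {T. T \<subseteq> edges G \<and> connected_by G T \<and>
       (\<forall>e\<in>T. \<not> connected_by G (T - {e}))}"

definition Div0 :: "('v,'e) mgraph \<Rightarrow> ('v \<Rightarrow> int) set" where
  "Div0 G = {D. (\<forall>w. w \<notin> verts G \<longrightarrow> D w = 0) \<and> (\<Sum>w\<in>verts G. D w) = 0}"

text \<open>D and D' differ by an integer combination z of vertex firings.\<close>
definition div_equiv :: "('v,'e) mgraph \<Rightarrow> ('v \<Rightarrow> int) \<Rightarrow> ('v \<Rightarrow> int) \<Rightarrow> bool" where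
  "div_equiv G D D' \<longleftrightarrow> (\<exists>z :: 'v \<Rightarrow> int. \<forall>w\<in>verts G.
      D' w = D w + (\<Sum>e\<in>inc G w. z (other G e w) - z w))"

definition pic_class :: "('v,'e) mgraph \<Rightarrow> ('v \<Rightarrow> int) \<Rightarrow> ('v \<Rightarrow> int) set" where
  "pic_class G D = {D' \<in> Div0 G. div_equiv G D D'}"

definition Pic0 :: "('v,'e) mgraph \<Rightarrow> ('v \<Rightarrow> int) set monoid" where
  "Pic0 G = \<lparr> carrier = pic_class G ` Div0 G,
              mult = (\<lambda>A B. {(\<lambda>w. a w + b w) | a b. a \<in> A \<and> b \<in> B}),
              one = pic_class G (\<lambda>_. 0) \<rparr>"

text \<open>r orients the tree T towards v: r u is the outgoing (rotor) edge at u \<noteq> v.\<close>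
definition oriented_towards ::
  "('v,'e) mgraph \<Rightarrow> 'e set \<Rightarrow> 'v \<Rightarrow> ('v \<Rightarrow> 'e) \<Rightarrow> bool" where
  "oriented_towards G T v r \<longleftrightarrow> (\<forall>u\<in>verts G - {v}. r u \<in> T \<and> u \<in> endpts G (r u) \<and>
      (\<exists>n. ((\<lambda>x. other G (r x) x) ^^ n) u = v))"

definition rr_step :: "('v,'e) mgraph \<Rightarrow> ('v \<Rightarrow> 'e \<Rightarrow> 'e) \<Rightarrow> 'v \<Rightarrow>
    ('v \<Rightarrow> int) \<times> ('v \<Rightarrow> 'e) \<Rightarrow> ('v \<Rightarrow> int) \<times> ('v \<Rightarrow> 'e) \<Rightarrow> bool" where
  "rr_step G \<rho> v s s' \<longleftrightarrow> (\<exists>u\<in>verts G. u \<noteq> v \<and> fst s u > 0 \<and>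
      (let e = \<rho> u (snd s u); w = other G e u in
         snd s' = (snd s)(u := e) \<and>
         fst s' = ((fst s)(u := fst s u - 1))(w := fst s w + 1)))"

definition rotor_routing :: "('v,'e) mgraph \<Rightarrow> ('v \<Rightarrow> 'e \<Rightarrow> 'e) \<Rightarrow> 'v \<Rightarrow>
    ('v \<Rightarrow> int) set \<Rightarrow> 'e set \<Rightarrow> 'e set" where
  "rotor_routing G \<rho> v S T = (THE T'. \<exists>D r0 D' r'.
      D \<in> S \<and> (\<forall>u\<in>verts G - {v}. 0 \<le> D u) \<and> oriented_towards G T v r0 \<and>
      (rr_step G \<rho> v)\<^sup>*\<^sup>* (D, r0) (D', r') \<and> (\<forall>u\<in>verts G - {v}. D' u = 0) \<and>
      T' = r' ` (verts G - {v}))"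

definition bern_step :: "('v,'e) mgraph \<Rightarrow> ('v \<Rightarrow> 'e \<Rightarrow> 'e) \<Rightarrow> 'e set \<Rightarrow>
    'e \<times> 'v \<Rightarrow> 'e \<times> 'v" where
  "bern_step G \<rho> T h = (let e = fst h; u = snd h in
     if e \<in> T then (let w = other G e u in (\<rho> w e, w)) else (\<rho> u e, u))"

definition bern_tour :: "('v,'e) mgraph \<Rightarrow> ('v \<Rightarrow> 'e \<Rightarrow> 'e) \<Rightarrow> 'v \<Rightarrow> 'e set \<Rightarrow> nat \<Rightarrow> 'e \<times> 'v" where
  "bern_tour G \<rho> v T n = (bern_step G \<rho> T ^^ n) (SOME e. e \<in> inc G v, v)"

definition bern_len :: "('v,'e) mgraph \<Rightarrow> ('v \<Rightarrow> 'e \<Rightarrow> 'e) \<Rightarrow> 'v \<Rightarrow> 'e set \<Rightarrow> nat" where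
  "bern_len G \<rho> v T = (LEAST n. n > 0 \<and> bern_tour G \<rho> v T n = bern_tour G \<rho> v T 0)"

text \<open>The divisor D_T: a chip on vertex w for each step at a half-edge (e',w) with e' not in T
  whose other half-edge has not been visited before.\<close>
definition bern_div :: "('v,'e) mgraph \<Rightarrow> ('v \<Rightarrow> 'e \<Rightarrow> 'e) \<Rightarrow> 'v \<Rightarrow> 'e set \<Rightarrow> 'v \<Rightarrow> int" where
  "bern_div G \<rho> v T w = int (card {n. n < bern_len G \<rho> v T \<and>
      (let h = bern_tour G \<rho> v T n in
         fst h \<notin> T \<and> snd h = w \<and>
         (fst h, other G (fst h) (snd h)) \<notin> bern_tour G \<rho> v T ` {..<n})})"

definition bernardi :: "('v,'e) mgraph \<Rightarrow> ('v \<Rightarrow> 'e \<Rightarrow> 'e) \<Rightarrow> 'v \<Rightarrow>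
    ('v \<Rightarrow> int) set \<Rightarrow> 'e set \<Rightarrow> 'e set" where
  "bernardi G \<rho> v S T = (THE T'. T' \<in> spanning_trees G \<and>
      (\<lambda>w. bern_div G \<rho> v T' w - bern_div G \<rho> v T w) \<in> S)"

datatype torsor_kind = RotorRouting | Bernardi

fun torsor :: "torsor_kind \<Rightarrow> ('v,'e) mgraph \<Rightarrow> ('v \<Rightarrow> 'e \<Rightarrow> 'e) \<Rightarrow> 'v \<Rightarrow>
    ('v \<Rightarrow> int) set \<Rightarrow> 'e set \<Rightarrow> 'e set" where
  "torsor RotorRouting = rotor_routing"
| "torsor Bernardi = bernardi"

definition half_edges :: "('v,'e) mgraph \<Rightarrow> ('e \<times> 'v) set" where
  "half_edges G = {(e, u). e \<in> edges G \<and> u \<in> endpts G e}"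

text \<open>(e,u) = edge e leaving u; maps to the edge following e at the other endpoint.\<close>
definition face_perm :: "('v,'e) mgraph \<Rightarrow> ('v \<Rightarrow> 'e \<Rightarrow> 'e) \<Rightarrow> 'e \<times> 'v \<Rightarrow> 'e \<times> 'v" where
  "face_perm G \<rho> h = (let u' = other G (fst h) (snd h) in (\<rho> u' (fst h), u'))"

definition cyc :: "('v,'e) mgraph \<Rightarrow> ('v \<Rightarrow> 'e \<Rightarrow> 'e) \<Rightarrow> nat" where
  "cyc G \<rho> = card {{(face_perm G \<rho> ^^ n) h | n. True} | h. h \<in> half_edges G}"

definition genus :: "('v,'e) mgraph \<Rightarrow> ('v \<Rightarrow> 'e \<Rightarrow> 'e) \<Rightarrow> int" where
  "genus G \<rho> = (2 - int (card (verts G)) + int (card (edges G)) - int (cyc G \<rho>)) div 2"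

end

theory Submission
  imports Defs
begin

section \<open>The example graph\<close>

definition G5 :: "(nat,nat) mgraph" where
  "G5 = \<lparr>verts = {0,1}, edges = {0..<5}, endpts = (\<lambda>_. {0,1})\<rparr>"

lemma G5_simps[simp]: "verts G5 = {0,1}" "edges G5 = {0..<5}" "endpts G5 e = {0,1}"
  by (simp_all add: G5_def)

definition sb :: "nat \<Rightarrow> nat" where
  "sb e = (if e=0 then 1 else if e=1 then 3 else if e=2 then 0 else if e=3 then 4 else if e=4 then 2 else e)"

definition R :: "nat \<Rightarrow> nat \<Rightarrow> nat" where
  "R u e = (if u = 0 then (if e=0 then 1 else if e=1 then 2 else if e=2 then 3 else if e=3 then 4 else if e=4 then 0 else e) else sb e)"

definition R2 :: "nat \<Rightarrow> nat \<Rightarrow> nat" where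
  "R2 u e = R u (R u e)"

lemma other_G5: "u \<in> {0,1} \<Longrightarrow> other G5 e u = 1 - u"
  unfolding other_def by (rule the_equality) auto

lemma inc_G5: "u \<in> {0,1} \<Longrightarrow> inc G5 u = {0..<5}"
  unfolding inc_def by auto

lemma connected_G5: "connected_by G5 F \<longleftrightarrow> F \<noteq> {}"
proof
  assume c: "connected_by G5 F"
  show "F \<noteq> {}"
  proof
    assume "F = {}"
    then have "adj G5 F = (\<lambda>_ _. False)" by (auto simp: adj_def fun_eq_iff)
    moreover have "(adj G5 F)\<^sup>*\<^sup>* 0 1" using c unfolding connected_by_def by auto
    ultimately show False by (metis rtranclp.cases zero_neq_one)
  qed
next
  assume "F \<noteq> {}"
  then have "adj G5 F 0 1" "adj G5 F 1 0" by (auto simp: adj_def insert_commute)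
  then show "connected_by G5 F" unfolding connected_by_def by auto
qed

lemma graph_G5: "graph G5"
  unfolding graph_def by (auto simp: connected_G5)

lemma st_G5: "spanning_trees G5 = {{t} | t. t < 5}"
proof -
  have "T \<subseteq> {0..<5} \<and> T \<noteq> {} \<and> (\<forall>e\<in>T. T - {e} = {}) \<longleftrightarrow> (\<exists>t. T = {t} \<and> t < 5)" for T :: "nat set"
  proof
    assume a: "T \<subseteq> {0..<5} \<and> T \<noteq> {} \<and> (\<forall>e\<in>T. T - {e} = {})"
    then obtain t where t: "t \<in> T" by blast
    with a have "T = {t}" by blast
    with a show "\<exists>t. T = {t} \<and> t < 5" by auto
  qed auto
  then show ?thesis unfolding spanning_trees_def by (auto simp: connected_G5)
qed

lemma all5: "(\<forall>t<(5::nat). P t) \<longleftrightarrow> P 0 \<and> P 1 \<and> P 2 \<and> P 3 \<and> P 4"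
  by (auto simp: numeral_eq_Suc less_Suc_eq)

lemma ex5I: "P 0 \<or> P 1 \<or> P 2 \<or> P 3 \<or> P 4 \<Longrightarrow> \<exists>n::nat. P n"
  by auto

lemma funpow_num: "(f ^^ numeral k) x = (f ^^ pred_numeral k) (f x)"
  by (simp only: numeral_eq_Suc funpow_Suc_right o_apply)

lemma ribbon_crit:
  fixes g :: "nat \<Rightarrow> nat"
  assumes into: "\<forall>x<5. g x < 5" and inj: "\<forall>x<5. \<forall>y<5. g x = g y \<longrightarrow> x = y"
    and tr0: "\<forall>e<5. \<forall>f<5. f = e \<or> f = g e \<or> f = g (g e) \<or> f = g (g (g e)) \<or> f = g (g (g (g e)))"
  shows "bij_betw g {0..<5::nat} {0..<5} \<and> (\<forall>e\<in>{0..<5}. \<forall>f\<in>{0..<5}. \<exists>n. (g ^^ n) e = f)"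
proof -
  have tr: "\<forall>e<5. \<forall>f<5. \<exists>n. (g ^^ n) e = f"
  proof (intro allI impI)
    fix e f :: nat assume "e < 5" "f < 5"
    then have "f = (g^^0) e \<or> f = (g^^1) e \<or> f = (g^^2) e \<or> f = (g^^3) e \<or> f = (g^^4) e"
      using tr0 by (simp add: funpow_num)
    then show "\<exists>n. (g ^^ n) e = f" by metis
  qed
  have i: "inj_on g {0..<5}" using inj by (auto simp: inj_on_def)
  have "g ` {0..<5} = {0..<5}" by (rule endo_inj_surj) (use into i in auto)
  then show ?thesis using i tr by (auto simp: bij_betw_def)
qed

lemma ribbon_G5:
  fixes \<rho> :: "nat \<Rightarrow> nat \<Rightarrow> nat"
  assumes "\<And>u. u \<in> {0,1} \<Longrightarrow> (\<forall>x<5. \<rho> u x < 5) \<and> (\<forall>x<5. \<forall>y<5. \<rho> u x = \<rho> u y \<longrightarrow> x = y)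
    \<and> (\<forall>e<5. \<forall>f<5. f = e \<or> f = \<rho> u e \<or> f = \<rho> u (\<rho> u e) \<or> f = \<rho> u (\<rho> u (\<rho> u e)) \<or> f = \<rho> u (\<rho> u (\<rho> u (\<rho> u e))))"
  shows "ribbon_graph G5 \<rho>"
proof -
  have "\<forall>u\<in>verts G5. bij_betw (\<rho> u) (inc G5 u) (inc G5 u) \<and>
        (\<forall>e\<in>inc G5 u. \<forall>f\<in>inc G5 u. \<exists>n. (\<rho> u ^^ n) e = f)"
  proof
    fix u assume u: "u \<in> verts G5"
    then have eq: "inc G5 u = {0..<5}" by (simp add: inc_G5)
    have X: "bij_betw (\<rho> u) {0..<5::nat} {0..<5} \<and> (\<forall>e\<in>{0..<5}. \<forall>f\<in>{0..<5}. \<exists>n. (\<rho> u ^^ n) e = f)"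
      proof -
      have u': "u \<in> {0,1}" using u by simp
      from assms[OF u'] show ?thesis by (intro ribbon_crit) blast+
    qed
    show "bij_betw (\<rho> u) (inc G5 u) (inc G5 u) \<and>
        (\<forall>e\<in>inc G5 u. \<forall>f\<in>inc G5 u. \<exists>n. (\<rho> u ^^ n) e = f)" unfolding eq by (rule X)
  qed
  then show ?thesis unfolding ribbon_graph_def using graph_G5 by blast
qed

lemma ribbon_R: "ribbon_graph G5 R"
  apply (rule ribbon_G5)
  apply (elim insertE emptyE; simp only:)
   apply (simp only: all5; simp add: R_def sb_def)+
  done

lemma ribbon_R2: "ribbon_graph G5 R2"
  apply (rule ribbon_G5)
  apply (elim insertE emptyE; simp only:)
   apply (simp only: all5; simp add: R2_def R_def sb_def)+
  done

section \<open>Genus\<close>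

definition fpc :: "(nat \<Rightarrow> nat \<Rightarrow> nat) \<Rightarrow> nat \<times> nat \<Rightarrow> nat \<times> nat" where
  "fpc \<rho> h = (\<rho> (1 - snd h) (fst h), 1 - snd h)"

fun itl :: "('a \<Rightarrow> 'a) \<Rightarrow> 'a \<Rightarrow> nat \<Rightarrow> 'a list" where
  "itl f h 0 = []"
| "itl f h (Suc n) = h # itl f (f h) n"

lemma itl_num: "itl f h (numeral k) = h # itl f (f h) (pred_numeral k)"
  by (simp add: numeral_eq_Suc)

lemma set_itl: "set (itl f h p) = (\<lambda>n. (f ^^ n) h) ` {..<p}"
proof (induction p arbitrary: h)
  case 0 then show ?case by simp
next
  case (Suc p)
  have "(\<lambda>n. (f ^^ n) h) ` {..<Suc p} = insert h ((\<lambda>n. (f ^^ Suc n) h) ` {..<p})"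
    unfolding lessThan_Suc_eq_insert_0 by (auto simp del: funpow.simps)
  also have "(\<lambda>n. (f ^^ Suc n) h) = (\<lambda>n. (f ^^ n) (f h))" by (simp only: funpow_Suc_right o_apply)
  finally show ?case using Suc by simp
qed

lemma orbit_itl:
  assumes "(f ^^ p) h = h" "0 < p"
  shows "{(f ^^ n) h | n. True} = set (itl f h p)"
proof -
  have "{(f ^^ n) h | n. True} = (\<lambda>n. (f ^^ n) h) ` {..<p}"
  proof (auto)
    fix n show "(f ^^ n) h \<in> (\<lambda>n. (f ^^ n) h) ` {..<p}"
      using funpow_mod_eq[where f=f and m=n and n=p and x=h, OF assms(1)] assms(2)
      by (metis image_eqI lessThan_iff mod_less_divisor)
  qed
  then show ?thesis by (simp add: set_itl)
qed

lemma snd_fpc: "snd h \<in> {0,1} \<Longrightarrow> snd (fpc \<rho> h) \<in> {0,1}"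
  by (auto simp: fpc_def)

lemma funpow_face: "snd h \<in> {0,1} \<Longrightarrow> (face_perm G5 \<rho> ^^ n) h = (fpc \<rho> ^^ n) h \<and> snd ((fpc \<rho> ^^ n) h) \<in> {0,1}"
proof (induction n)
  case 0 then show ?case by simp
next
  case (Suc n)
  then show ?case
    by (simp add: face_perm_def fpc_def other_G5 del: insert_iff) (auto simp: fpc_def)
qed

definition H5 :: "(nat \<times> nat) set" where
  "H5 = {(0,0),(0,1),(1,0),(1,1),(2,0),(2,1),(3,0),(3,1),(4,0),(4,1)}"

lemma half_edges_G5: "half_edges G5 = H5"
  unfolding half_edges_def H5_def by (auto simp: numeral_eq_Suc less_Suc_eq)

lemma cyc_gen:
  assumes "\<forall>h\<in>H5. (fpc \<rho> ^^ p) h = h" "0 < p"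
  shows "cyc G5 \<rho> = card ((\<lambda>h. set (itl (fpc \<rho>) h p)) ` H5)"
proof -
  have "{{(face_perm G5 \<rho> ^^ n) h | n. True} | h. h \<in> half_edges G5} = (\<lambda>h. set (itl (fpc \<rho>) h p)) ` H5"
  proof -
    have "{(face_perm G5 \<rho> ^^ n) h | n. True} = set (itl (fpc \<rho>) h p)" if "h \<in> H5" for h
    proof -
      have "snd h \<in> {0,1}" using that by (auto simp: H5_def)
      then have "{(face_perm G5 \<rho> ^^ n) h | n. True} = {(fpc \<rho> ^^ n) h | n. True}"
        using funpow_face by metis
      also have "\<dots> = set (itl (fpc \<rho>) h p)" using assms that by (intro orbit_itl) auto
      finally show ?thesis .
    qed
    then show ?thesis unfolding half_edges_G5 by blast
  qed
  then show ?thesis unfolding cyc_def by simp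
qed

lemma cyc_R: "cyc G5 R = 1"
proof -
  have "\<forall>h\<in>H5. (fpc R ^^ 10) h = h"
    unfolding H5_def ball_simps by (simp add: funpow_num fpc_def R_def sb_def)
  then have c: "cyc G5 R = card ((\<lambda>h. set (itl (fpc R) h 10)) ` H5)" by (rule cyc_gen) simp
  have "\<forall>h\<in>H5. set (itl (fpc R) h 10) = H5"
    unfolding H5_def ball_simps by (simp add: itl_num fpc_def R_def sb_def; blast)
  then have "(\<lambda>h. set (itl (fpc R) h 10)) ` H5 = {H5}" by (auto simp: H5_def)
  then show ?thesis using c by simp
qed

lemma cyc_R2: "cyc G5 R2 = 3"
proof -
  define A :: "(nat \<times> nat) set" where "A = {(0,0),(3,1)}"
  define B :: "(nat \<times> nat) set" where "B = {(0,1),(2,0),(1,1),(3,0),(2,1),(4,0)}"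
  define C :: "(nat \<times> nat) set" where "C = {(1,0),(4,1)}"
  have "\<forall>h\<in>H5. (fpc R2 ^^ 6) h = h"
    unfolding H5_def ball_simps by (simp add: funpow_num fpc_def R2_def R_def sb_def)
  then have c: "cyc G5 R2 = card ((\<lambda>h. set (itl (fpc R2) h 6)) ` H5)" by (rule cyc_gen) simp
  have o: "set (itl (fpc R2) (0,0) 6) = A"
    "set (itl (fpc R2) (3,1) 6) = A"
    "set (itl (fpc R2) (0,1) 6) = B"
    "set (itl (fpc R2) (2,0) 6) = B"
    "set (itl (fpc R2) (1,1) 6) = B"
    "set (itl (fpc R2) (3,0) 6) = B"
    "set (itl (fpc R2) (2,1) 6) = B"
    "set (itl (fpc R2) (4,0) 6) = B"
    "set (itl (fpc R2) (1,0) 6) = C"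
    "set (itl (fpc R2) (4,1) 6) = C"
    unfolding A_def B_def C_def by (simp add: itl_num fpc_def R2_def R_def sb_def insert_commute)+
  have "(\<lambda>h. set (itl (fpc R2) h 6)) ` H5 = {A, B, C}"
    unfolding H5_def image_insert image_empty o by auto
  moreover have "card {A, B, C} = 3"
  proof -
    have "(0,0) \<in> A" "(0,0) \<notin> B" "(0,0) \<notin> C" "(1,0) \<in> C" "(1,0) \<notin> B"
      unfolding A_def B_def C_def by simp_all
    then have "A \<noteq> B" "A \<noteq> C" "B \<noteq> C" by blast+
    then show ?thesis by simp
  qed
  ultimately show ?thesis using c by simp
qed

lemma genus_diff: "genus G5 R \<noteq> genus G5 R2"
  unfolding genus_def using cyc_R cyc_R2 by simp

section \<open>Picard group\<close>

definition P :: "int \<Rightarrow> (nat \<Rightarrow> int) set" where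
  "P k = {D. (\<forall>w. w \<notin> {0,1} \<longrightarrow> D w = 0) \<and> D 0 + D 1 = 0 \<and> D 0 mod 5 = k mod 5}"

definition dk :: "int \<Rightarrow> nat \<Rightarrow> int" where
  "dk k = (\<lambda>w. if w = 0 then k else if w = 1 then -k else 0)"

lemma dk_P: "dk k \<in> P k"
  by (simp add: dk_def P_def)

lemma Div0_G5: "Div0 G5 = {D. (\<forall>w. w \<notin> {0,1} \<longrightarrow> D w = 0) \<and> D 0 + D 1 = 0}"
  unfolding Div0_def by simp

lemma sum_inc_G5: fixes z :: "nat \<Rightarrow> int" shows "w \<in> {0,1} \<Longrightarrow> (\<Sum>e\<in>inc G5 w. z (other G5 e w) - z w) = 5 * (z (1 - w) - z w)"
  by (simp add: inc_G5 other_G5)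

lemma div_equiv_G5:
  assumes "D \<in> Div0 G5" "D' \<in> Div0 G5"
  shows "div_equiv G5 D D' \<longleftrightarrow> D 0 mod 5 = D' 0 mod 5"
proof
  assume "div_equiv G5 D D'"
  then obtain z where "\<forall>w\<in>{0,1}. D' w = D w + (\<Sum>e\<in>inc G5 w. z (other G5 e w) - z w)"
    unfolding div_equiv_def by auto
  then have "D' 0 = D 0 + 5 * (z 1 - z 0)" using sum_inc_G5[of 0 z] by simp
  then obtain x where "D' 0 = D 0 + 5 * x" by blast
  then show "D 0 mod 5 = D' 0 mod 5" by simp
next
  assume m: "D 0 mod 5 = D' 0 mod 5"
  define q where "q = (D' 0 - D 0) div 5"
  have "D' 0 mod 5 = D 0 mod 5" using m by simp
  then have dv: "5 dvd D' 0 - D 0" by (simp only: mod_eq_dvd_iff)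
  have q: "D' 0 - D 0 = 5 * q" unfolding q_def using dv by (rule dvd_mult_div_cancel[symmetric])
  define z :: "nat \<Rightarrow> int" where "z = (\<lambda>w. if w = 1 then q else 0)"
  have d: "D 1 = - D 0" "D' 1 = - D' 0" using assms by (auto simp: Div0_G5)
  have "\<forall>w\<in>{0,1}. D' w = D w + (\<Sum>e\<in>inc G5 w. z (other G5 e w) - z w)"
  proof
    fix w :: nat assume w: "w \<in> {0,1}"
    show "D' w = D w + (\<Sum>e\<in>inc G5 w. z (other G5 e w) - z w)"
      unfolding sum_inc_G5[OF w]
    proof (cases "w = 0")
      case True
      have "z (1 - w) = q" "z w = 0" by (simp_all add: z_def True)
      then show "D' w = D w + 5 * (z (1 - w) - z w)" using q True by simp
    next
      case False then have "w = 1" using w by simp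
      then have "z (1 - w) = 0" "z w = q" by (simp_all add: z_def)
      then show "D' w = D w + 5 * (z (1 - w) - z w)" using q d \<open>w = 1\<close> by simp
    qed
  qed
  then show "div_equiv G5 D D'" unfolding div_equiv_def G5_simps(1) by (rule exI[of _ z])
qed

lemma pic_class_G5: "D \<in> Div0 G5 \<Longrightarrow> pic_class G5 D = P (D 0)"
  unfolding pic_class_def P_def using div_equiv_G5[of D] by (auto simp: Div0_G5)

lemma carrier_Pic0: "carrier (Pic0 G5) = range P"
proof
  show "carrier (Pic0 G5) \<subseteq> range P"
    unfolding Pic0_def by (auto simp: pic_class_G5)
  show "range P \<subseteq> carrier (Pic0 G5)"
  proof
    fix S assume "S \<in> range P"
    then obtain k where k: "S = P k" by auto
    have "dk k \<in> Div0 G5" by (simp add: Div0_G5 dk_def)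
    moreover have "pic_class G5 (dk k) = P k" using pic_class_G5[OF calculation] by (simp add: dk_def)
    ultimately show "S \<in> carrier (Pic0 G5)" unfolding Pic0_def k by force
  qed
qed

lemma P_eq: "P i = P j \<longleftrightarrow> i mod 5 = j mod 5"
proof
  assume "P i = P j"
  then have "dk i \<in> P j" using dk_P by blast
  then show "i mod 5 = j mod 5" by (simp add: P_def dk_def)
qed (simp add: P_def)

lemma mult_P: "mult (Pic0 G5) (P i) (P j) = P (i + j)"
proof -
  have "{(\<lambda>w. a w + b w) | a b. a \<in> P i \<and> b \<in> P j} = P (i + j)"
  proof
    show "{(\<lambda>w. a w + b w) | a b. a \<in> P i \<and> b \<in> P j} \<subseteq> P (i + j)"
    proof
      fix x assume "x \<in> {(\<lambda>w. a w + b w) | a b. a \<in> P i \<and> b \<in> P j}"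
      then obtain a b where x: "x = (\<lambda>w. a w + b w)" and a: "a \<in> P i" and b: "b \<in> P j" by blast
      have "(a 0 + b 0) mod 5 = (i + j) mod 5"
        using a b by (intro mod_add_cong) (simp_all add: P_def)
      then show "x \<in> P (i + j)" using a b unfolding x P_def by auto
    qed
    show "P (i + j) \<subseteq> {(\<lambda>w. a w + b w) | a b. a \<in> P i \<and> b \<in> P j}"
    proof
      fix D assume D: "D \<in> P (i + j)"
      define b where "b = (\<lambda>w. D w - dk i w)"
      have "(D 0 - i) mod 5 = ((i + j) - i) mod 5"
        using D by (intro mod_diff_cong) (simp_all add: P_def)
      then have "b \<in> P j" using D unfolding b_def P_def dk_def by auto
      moreover have "D = (\<lambda>w. dk i w + b w)" by (simp add: b_def)
      ultimately show "D \<in> {(\<lambda>w. a w + b w) | a b. a \<in> P i \<and> b \<in> P j}" using dk_P by blast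
    qed
  qed
  then show ?thesis unfolding Pic0_def by simp
qed

definition \<gamma>5 :: "(nat \<Rightarrow> int) set \<Rightarrow> (nat \<Rightarrow> int) set" where
  "\<gamma>5 S = P (3 * (SOME k. S = P k))"

lemma gamma_P: "\<gamma>5 (P k) = P (3 * k)"
proof -
  have "P k = P (SOME k'. P k = P k')" by (rule someI) (rule refl)
  then have "(SOME k'. P k = P k') mod 5 = k mod 5" using P_eq by metis
  then have "(3 * (SOME k'. P k = P k')) mod 5 = (3 * k) mod 5" by (metis mod_mult_right_eq)
  then show ?thesis unfolding \<gamma>5_def using P_eq by blast
qed

lemma gamma_iso: "\<gamma>5 \<in> iso (Pic0 G5) (Pic0 G5)"
proof -
  have hom: "\<gamma>5 \<in> hom (Pic0 G5) (Pic0 G5)"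
    unfolding hom_def carrier_Pic0
  proof (intro CollectI conjI ballI)
    show "\<gamma>5 \<in> range P \<rightarrow> range P" by (auto simp: gamma_P)
    fix x y assume "x \<in> range P" "y \<in> range P"
    then obtain a b where "x = P a" "y = P b" by blast
    then show "\<gamma>5 (x \<otimes>\<^bsub>Pic0 G5\<^esub> y) = \<gamma>5 x \<otimes>\<^bsub>Pic0 G5\<^esub> \<gamma>5 y"
      by (simp add: gamma_P mult_P distrib_left)
  qed
  have inj: "inj_on \<gamma>5 (range P)"
  proof (rule inj_onI)
    fix x y assume "x \<in> range P" "y \<in> range P" "\<gamma>5 x = \<gamma>5 y"
    then obtain i j where ij: "x = P i" "y = P j" "P (3 * i) = P (3 * j)" by (auto simp: gamma_P)
    then have "(3 * i) mod 5 = (3 * j) mod 5" using P_eq by blast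
    then have "(2 * (3 * i)) mod 5 = (2 * (3 * j)) mod 5" by (metis mod_mult_right_eq)
    moreover have "2 * (3 * i) = i + i * 5" "2 * (3 * j) = j + j * 5" by simp_all
    ultimately have "i mod 5 = j mod 5" by (metis mod_mult_self1)
    then show "x = y" using ij P_eq by blast
  qed
  have surj: "\<gamma>5 ` range P = range P"
  proof
    show "\<gamma>5 ` range P \<subseteq> range P" by (auto simp: gamma_P)
    show "range P \<subseteq> \<gamma>5 ` range P"
    proof
      fix S assume "S \<in> range P"
      then obtain k where k: "S = P k" by auto
      have "3 * (2 * k) = k + k * 5" by simp
      then have "(3 * (2 * k)) mod 5 = k mod 5" by (metis mod_mult_self1)
      then have "\<gamma>5 (P (2 * k)) = S" using k gamma_P P_eq by metis
      then show "S \<in> \<gamma>5 ` range P" by blast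
    qed
  qed
  show ?thesis unfolding iso_def using hom inj surj by (auto simp: bij_betw_def carrier_Pic0)
qed

section \<open>Rotor routing on G5\<close>

lemma verts_minus: "v \<in> {0,1} \<Longrightarrow> verts G5 - {v} = {1 - v}"
  by auto

lemma rr_step_G5:
  assumes "rr_step G5 \<rho> v s s''" "v \<in> {0,1}"
  shows "fst s (1 - v) > 0 \<and> fst s'' (1 - v) = fst s (1 - v) - 1 \<and> snd s'' (1 - v) = \<rho> (1 - v) (snd s (1 - v))"
proof -
  obtain x where x: "x \<in> verts G5" "x \<noteq> v" "fst s x > 0"
    and st: "snd s'' = (snd s)(x := \<rho> x (snd s x))"
      "fst s'' = ((fst s)(x := fst s x - 1))(other G5 (\<rho> x (snd s x)) x := fst s (other G5 (\<rho> x (snd s x)) x) + 1)"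
    using assms(1) unfolding rr_step_def Let_def by blast
  have xv: "x = 1 - v" using x assms(2) by auto
  have o: "other G5 (\<rho> x (snd s x)) x = v" using x xv assms(2) by (auto simp: other_G5)
  show ?thesis using st x xv o assms(2) by auto
qed

lemma rr_inv:
  assumes "(rr_step G5 \<rho> v)\<^sup>*\<^sup>* s s'" "v \<in> {0,1}"
  shows "\<exists>j. fst s' (1 - v) = fst s (1 - v) - int j \<and> snd s' (1 - v) = (\<rho> (1 - v) ^^ j) (snd s (1 - v))"
  using assms(1)
proof (induction rule: rtranclp_induct)
  case base
  show ?case by (rule exI[of _ 0]) simp
next
  case (step y z)
  from step.IH obtain j where j: "fst y (1 - v) = fst s (1 - v) - int j"
    "snd y (1 - v) = (\<rho> (1 - v) ^^ j) (snd s (1 - v))" by blast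
  from rr_step_G5[OF step.hyps(2) assms(2)] have
    "fst z (1 - v) = fst y (1 - v) - 1" "snd z (1 - v) = \<rho> (1 - v) (snd y (1 - v))" by auto
  then show ?case using j by (intro exI[of _ "Suc j"]) simp
qed

lemma rr_run:
  assumes v: "v \<in> {0,1}" and "int j \<le> D (1 - v)"
  shows "(rr_step G5 \<rho> v)\<^sup>*\<^sup>* (D, r0)
     (D(1 - v := D (1 - v) - int j, v := D v + int j), r0(1 - v := (\<rho> (1 - v) ^^ j) (r0 (1 - v))))"
  using assms(2)
proof (induction j)
  case 0
  have "D(1 - v := D (1 - v) - int 0, v := D v + int 0) = D" by (simp add: fun_eq_iff)
  moreover have "r0(1 - v := (\<rho> (1 - v) ^^ 0) (r0 (1 - v))) = r0" by simp
  ultimately show ?case by simp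
next
  case (Suc j)
  let ?u = "1 - v"
  have uv: "?u \<noteq> v" "?u \<in> verts G5" using v by auto
  define Dj where "Dj = D(?u := D ?u - int j, v := D v + int j)"
  define rj where "rj = r0(?u := (\<rho> ?u ^^ j) (r0 ?u))"
  have "int j \<le> D ?u" using Suc.prems by simp
  then have IH: "(rr_step G5 \<rho> v)\<^sup>*\<^sup>* (D, r0) (Dj, rj)" unfolding Dj_def rj_def by (rule Suc.IH)
  have o: "other G5 (\<rho> ?u (rj ?u)) ?u = v" using v by (auto simp: other_G5)
  have pos: "Dj ?u > 0" using Suc uv by (simp add: Dj_def)
  have "rr_step G5 \<rho> v (Dj, rj)
     (D(?u := D ?u - int (Suc j), v := D v + int (Suc j)), r0(?u := (\<rho> ?u ^^ Suc j) (r0 ?u)))"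
    unfolding rr_step_def Let_def
  proof (rule bexI[of _ ?u], intro conjI)
    show "?u \<noteq> v" "0 < fst (Dj, rj) ?u" using uv pos by simp_all
    show "snd (D(?u := D ?u - int (Suc j), v := D v + int (Suc j)), r0(?u := (\<rho> ?u ^^ Suc j) (r0 ?u))) =
        (snd (Dj, rj))(?u := \<rho> ?u (snd (Dj, rj) ?u))"
      by (simp add: rj_def)
    show "fst (D(?u := D ?u - int (Suc j), v := D v + int (Suc j)), r0(?u := (\<rho> ?u ^^ Suc j) (r0 ?u))) =
      ((fst (Dj, rj))(?u := fst (Dj, rj) ?u - 1))
        (other G5 (\<rho> ?u (snd (Dj, rj) ?u)) ?u := fst (Dj, rj) (other G5 (\<rho> ?u (snd (Dj, rj) ?u)) ?u) + 1)"
      using o uv by (auto simp: Dj_def fun_eq_iff)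
  qed (use uv in simp)
  then show ?case using IH by (rule rtranclp.rtrancl_into_rtrancl[rotated])
qed

lemma rotor_G5:
  fixes \<rho> :: "nat \<Rightarrow> nat \<Rightarrow> nat"
  assumes v: "v \<in> {0,1}" and per: "(\<rho> (1 - v) ^^ 5) t = t"
  shows "rotor_routing G5 \<rho> v (P k) {t} = {(\<rho> (1 - v) ^^ nat ((if v = 1 then k else - k) mod 5)) t}"
proof -
  let ?u = "1 - v"
  let ?s = "if v = 1 then k else - k"
  define m where "m = nat (?s mod 5)"
  have uv: "?u \<noteq> v" "?u \<in> {0,1}" using v by auto
  have key: "D ?u mod 5 = ?s mod 5" if "D \<in> P k" for D
  proof (cases "v = 1")
    case True then show ?thesis using that by (simp add: P_def)
  next
    case False
    then have v0: "v = 0" using v by simp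
    have "D 1 = 0 - D 0" "D 0 mod 5 = k mod 5" using that by (auto simp: P_def)
    then have "D 1 mod 5 = (0 - k) mod 5" by (metis mod_diff_cong)
    then show ?thesis using v0 by simp
  qed
  show ?thesis
    unfolding rotor_routing_def
  proof (rule the_equality)
    define D where "D = (\<lambda>w::nat. if w = ?u then int m else if w = v then - int m else 0)"
    define r0 where "r0 = (\<lambda>_::nat. t)"
    have DP: "D \<in> P k"
    proof -
      have "D 0 mod 5 = k mod 5"
      proof (cases "v = 1")
        case True then show ?thesis by (simp add: D_def m_def)
      next
        case False
        then have v0: "v = 0" using v by simp
        have "D 0 = - ((- k) mod 5)" using v0 by (simp add: D_def m_def)
        then show ?thesis by (simp add: mod_minus_eq)
      qed
      moreover have "D w = 0" if "w \<notin> {0,1}" for w using that v by (auto simp: D_def)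
      moreover have "D 0 + D 1 = 0" using v by (auto simp: D_def)
      ultimately show ?thesis by (simp add: P_def)
    qed
    have nonneg: "\<forall>x\<in>verts G5 - {v}. 0 \<le> D x" using v by (auto simp: D_def)
    have ori: "oriented_towards G5 {t} v r0"
      unfolding oriented_towards_def
    proof
      fix x assume "x \<in> verts G5 - {v}"
      then have x: "x = ?u" "x \<in> {0,1}" using v by auto
      have a: "r0 x \<in> {t}" "x \<in> endpts G5 (r0 x)" using x by (auto simp: r0_def)
      have b: "\<exists>n. ((\<lambda>x. other G5 (r0 x) x) ^^ n) x = v"
        by (rule exI[of _ 1]) (use x v in \<open>auto simp: other_G5\<close>)
      from a b show "r0 x \<in> {t} \<and> x \<in> endpts G5 (r0 x) \<and> (\<exists>n. ((\<lambda>x. other G5 (r0 x) x) ^^ n) x = v)"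
        by blast
    qed
    have run: "(rr_step G5 \<rho> v)\<^sup>*\<^sup>* (D, r0)
     (D(?u := D ?u - int m, v := D v + int m), r0(?u := (\<rho> ?u ^^ m) (r0 ?u)))"
      by (rule rr_run[OF v]) (simp add: D_def)
    have fin: "\<forall>x\<in>verts G5 - {v}. (D(?u := D ?u - int m, v := D v + int m)) x = 0"
      using v by (auto simp: D_def)
    have img: "(r0(?u := (\<rho> ?u ^^ m) (r0 ?u))) ` (verts G5 - {v}) = {(\<rho> ?u ^^ m) t}"
      using v by (auto simp: r0_def)
    show "\<exists>D r0 D' r'. D \<in> P k \<and> (\<forall>u\<in>verts G5 - {v}. 0 \<le> D u) \<and> oriented_towards G5 {t} v r0 \<and>
      (rr_step G5 \<rho> v)\<^sup>*\<^sup>* (D, r0) (D', r') \<and> (\<forall>u\<in>verts G5 - {v}. D' u = 0) \<and>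
      {(\<rho> ?u ^^ nat (?s mod 5)) t} = r' ` (verts G5 - {v})"
      using DP nonneg ori run fin img unfolding m_def by blast
  next
    fix T' assume "\<exists>D r0 D' r'. D \<in> P k \<and> (\<forall>u\<in>verts G5 - {v}. 0 \<le> D u) \<and> oriented_towards G5 {t} v r0 \<and>
      (rr_step G5 \<rho> v)\<^sup>*\<^sup>* (D, r0) (D', r') \<and> (\<forall>u\<in>verts G5 - {v}. D' u = 0) \<and>
      T' = r' ` (verts G5 - {v})"
    then obtain D r0 D' r' where DP: "D \<in> P k" and nn: "\<forall>u\<in>verts G5 - {v}. 0 \<le> D u"
      and ori: "oriented_towards G5 {t} v r0" and run: "(rr_step G5 \<rho> v)\<^sup>*\<^sup>* (D, r0) (D', r')"
      and fin: "\<forall>u\<in>verts G5 - {v}. D' u = 0" and T': "T' = r' ` (verts G5 - {v})" by blast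
    have uin: "?u \<in> verts G5 - {v}" using v by auto
    have r0u: "r0 ?u = t" using ori uin unfolding oriented_towards_def by blast
    obtain j where j: "D' ?u = D ?u - int j" "r' ?u = (\<rho> ?u ^^ j) (r0 ?u)"
      using rr_inv[OF run v] by auto
    have "int j = D ?u" using j fin uin by auto
    then have "int (j mod 5) = ?s mod 5" using key[OF DP] by (simp add: of_nat_mod)
    then have jm: "j mod 5 = m" unfolding m_def by linarith
    have "(\<rho> ?u ^^ j) t = (\<rho> ?u ^^ m) t" using funpow_mod_eq[where f="\<rho> ?u" and m=j and n=5 and x=t, OF per]
      by (simp add: jm)
    then show "T' = {(\<rho> ?u ^^ nat (?s mod 5)) t}"
      unfolding T' verts_minus[OF v] using j r0u by (simp add: m_def)
  qed
qed

section \<open>Bernardi on G5\<close>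

definition bstep :: "(nat \<Rightarrow> nat \<Rightarrow> nat) \<Rightarrow> nat \<Rightarrow> nat \<times> nat \<Rightarrow> nat \<times> nat" where
  "bstep \<rho> t h = (if fst h = t then (\<rho> (1 - snd h) (fst h), 1 - snd h) else (\<rho> (snd h) (fst h), snd h))"

fun tourl :: "(nat \<Rightarrow> nat \<Rightarrow> nat) \<Rightarrow> nat \<Rightarrow> nat \<times> nat \<Rightarrow> nat \<Rightarrow> (nat \<times> nat) list" where
  "tourl \<rho> t h 0 = []"
| "tourl \<rho> t h (Suc n) = h # tourl \<rho> t (bstep \<rho> t h) n"

lemma tourl_num: "tourl \<rho> t h (numeral k) = h # tourl \<rho> t (bstep \<rho> t h) (pred_numeral k)"
  by (simp add: numeral_eq_Suc)

fun cntl :: "nat \<Rightarrow> nat \<Rightarrow> (nat \<times> nat) list \<Rightarrow> (nat \<times> nat) list \<Rightarrow> nat" where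
  "cntl t w vis [] = 0"
| "cntl t w vis (h # hs) = (if fst h \<noteq> t \<and> snd h = w \<and> (fst h, 1 - snd h) \<notin> set vis then 1 else 0) + cntl t w (h # vis) hs"

definition bcnt :: "(nat \<Rightarrow> nat \<Rightarrow> nat) \<Rightarrow> nat \<Rightarrow> nat \<Rightarrow> nat \<Rightarrow> nat \<Rightarrow> nat" where
  "bcnt \<rho> t e0 v w = cntl t w [] (tourl \<rho> t (e0, v) 10)"

definition ret :: "(nat \<Rightarrow> nat \<Rightarrow> nat) \<Rightarrow> nat \<Rightarrow> nat \<Rightarrow> nat \<Rightarrow> bool" where
  "ret \<rho> t e0 v = (let l = tourl \<rho> t (e0, v) 11 in l ! 10 = (e0, v) \<and> (e0, v) \<notin> set (tl (take 10 l)))"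

definition Bok :: "(nat \<Rightarrow> nat \<Rightarrow> nat) \<Rightarrow> nat \<Rightarrow> nat \<Rightarrow> bool" where
  "Bok \<rho> v e0 = ((\<forall>t<5. ret \<rho> t e0 v \<and> bcnt \<rho> t e0 v 0 + bcnt \<rho> t e0 v 1 = 4) \<and>
     (\<forall>a<5. \<forall>b<5. bcnt \<rho> a e0 v 0 mod 5 = bcnt \<rho> b e0 v 0 mod 5 \<longrightarrow> a = b))"

definition Brel :: "nat \<Rightarrow> nat \<Rightarrow> bool" where
  "Brel v e0 = (\<exists>c. \<forall>a<5. int (bcnt R2 a e0 v 0) mod 5 = (3 * int (bcnt R a e0 v 0) + c) mod 5)"

lemma facts_R_0_0:
  "bcnt R 0 0 0 0 = 0"
  "bcnt R 0 0 0 1 = 4"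
  "ret R 0 0 0"
  "bcnt R 1 0 0 0 = 1"
  "bcnt R 1 0 0 1 = 3"
  "ret R 1 0 0"
  "bcnt R 2 0 0 0 = 2"
  "bcnt R 2 0 0 1 = 2"
  "ret R 2 0 0"
  "bcnt R 3 0 0 0 = 3"
  "bcnt R 3 0 0 1 = 1"
  "ret R 3 0 0"
  "bcnt R 4 0 0 0 = 4"
  "bcnt R 4 0 0 1 = 0"
  "ret R 4 0 0"
  by (simp_all add: bcnt_def ret_def tourl_num bstep_def R_def sb_def)

lemma facts_R2_0_0:
  "bcnt R2 0 0 0 0 = 0"
  "bcnt R2 0 0 0 1 = 4"
  "ret R2 0 0 0"
  "bcnt R2 1 0 0 0 = 3"
  "bcnt R2 1 0 0 1 = 1"
  "ret R2 1 0 0"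
  "bcnt R2 2 0 0 0 = 1"
  "bcnt R2 2 0 0 1 = 3"
  "ret R2 2 0 0"
  "bcnt R2 3 0 0 0 = 4"
  "bcnt R2 3 0 0 1 = 0"
  "ret R2 3 0 0"
  "bcnt R2 4 0 0 0 = 2"
  "bcnt R2 4 0 0 1 = 2"
  "ret R2 4 0 0"
  by (simp_all add: bcnt_def ret_def tourl_num bstep_def R2_def R_def sb_def)

lemma ok_0_0: "Bok R 0 0 \<and> Bok R2 0 0 \<and> Brel 0 0"
  unfolding Bok_def Brel_def
  apply (intro conjI exI[of _ 0])
  apply (simp_all only: all5)
  apply (simp_all add: facts_R_0_0 facts_R2_0_0 facts_R_0_0[simplified One_nat_def] facts_R2_0_0[simplified One_nat_def])
  done

lemma facts_R_0_1:
  "bcnt R 0 1 0 0 = 4"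
  "bcnt R 0 1 0 1 = 0"
  "ret R 0 1 0"
  "bcnt R 1 1 0 0 = 0"
  "bcnt R 1 1 0 1 = 4"
  "ret R 1 1 0"
  "bcnt R 2 1 0 0 = 1"
  "bcnt R 2 1 0 1 = 3"
  "ret R 2 1 0"
  "bcnt R 3 1 0 0 = 2"
  "bcnt R 3 1 0 1 = 2"
  "ret R 3 1 0"
  "bcnt R 4 1 0 0 = 3"
  "bcnt R 4 1 0 1 = 1"
  "ret R 4 1 0"
  by (simp_all add: bcnt_def ret_def tourl_num bstep_def R_def sb_def)

lemma facts_R2_0_1:
  "bcnt R2 0 1 0 0 = 2"
  "bcnt R2 0 1 0 1 = 2"
  "ret R2 0 1 0"
  "bcnt R2 1 1 0 0 = 0"
  "bcnt R2 1 1 0 1 = 4"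
  "ret R2 1 1 0"
  "bcnt R2 2 1 0 0 = 3"
  "bcnt R2 2 1 0 1 = 1"
  "ret R2 2 1 0"
  "bcnt R2 3 1 0 0 = 1"
  "bcnt R2 3 1 0 1 = 3"
  "ret R2 3 1 0"
  "bcnt R2 4 1 0 0 = 4"
  "bcnt R2 4 1 0 1 = 0"
  "ret R2 4 1 0"
  by (simp_all add: bcnt_def ret_def tourl_num bstep_def R2_def R_def sb_def)

lemma ok_0_1: "Bok R 0 1 \<and> Bok R2 0 1 \<and> Brel 0 1"
  unfolding Bok_def Brel_def
  apply (intro conjI exI[of _ 0])
  apply (simp_all only: all5)
  apply (simp_all add: facts_R_0_1 facts_R2_0_1 facts_R_0_1[simplified One_nat_def] facts_R2_0_1[simplified One_nat_def])
  done

lemma facts_R_0_2: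
  "bcnt R 0 2 0 0 = 3"
  "bcnt R 0 2 0 1 = 1"
  "ret R 0 2 0"
  "bcnt R 1 2 0 0 = 4"
  "bcnt R 1 2 0 1 = 0"
  "ret R 1 2 0"
  "bcnt R 2 2 0 0 = 0"
  "bcnt R 2 2 0 1 = 4"
  "ret R 2 2 0"
  "bcnt R 3 2 0 0 = 1"
  "bcnt R 3 2 0 1 = 3"
  "ret R 3 2 0"
  "bcnt R 4 2 0 0 = 2"
  "bcnt R 4 2 0 1 = 2"
  "ret R 4 2 0"
  by (simp_all add: bcnt_def ret_def tourl_num bstep_def R_def sb_def)

lemma facts_R2_0_2:
  "bcnt R2 0 2 0 0 = 4"
  "bcnt R2 0 2 0 1 = 0"
  "ret R2 0 2 0"
  "bcnt R2 1 2 0 0 = 2"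
  "bcnt R2 1 2 0 1 = 2"
  "ret R2 1 2 0"
  "bcnt R2 2 2 0 0 = 0"
  "bcnt R2 2 2 0 1 = 4"
  "ret R2 2 2 0"
  "bcnt R2 3 2 0 0 = 3"
  "bcnt R2 3 2 0 1 = 1"
  "ret R2 3 2 0"
  "bcnt R2 4 2 0 0 = 1"
  "bcnt R2 4 2 0 1 = 3"
  "ret R2 4 2 0"
  by (simp_all add: bcnt_def ret_def tourl_num bstep_def R2_def R_def sb_def)

lemma ok_0_2: "Bok R 0 2 \<and> Bok R2 0 2 \<and> Brel 0 2"
  unfolding Bok_def Brel_def
  apply (intro conjI exI[of _ 0])
  apply (simp_all only: all5)
  apply (simp_all add: facts_R_0_2 facts_R2_0_2 facts_R_0_2[simplified One_nat_def] facts_R2_0_2[simplified One_nat_def])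
  done

lemma facts_R_0_3:
  "bcnt R 0 3 0 0 = 2"
  "bcnt R 0 3 0 1 = 2"
  "ret R 0 3 0"
  "bcnt R 1 3 0 0 = 3"
  "bcnt R 1 3 0 1 = 1"
  "ret R 1 3 0"
  "bcnt R 2 3 0 0 = 4"
  "bcnt R 2 3 0 1 = 0"
  "ret R 2 3 0"
  "bcnt R 3 3 0 0 = 0"
  "bcnt R 3 3 0 1 = 4"
  "ret R 3 3 0"
  "bcnt R 4 3 0 0 = 1"
  "bcnt R 4 3 0 1 = 3"
  "ret R 4 3 0"
  by (simp_all add: bcnt_def ret_def tourl_num bstep_def R_def sb_def)

lemma facts_R2_0_3:
  "bcnt R2 0 3 0 0 = 1"
  "bcnt R2 0 3 0 1 = 3"
  "ret R2 0 3 0"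
  "bcnt R2 1 3 0 0 = 4"
  "bcnt R2 1 3 0 1 = 0"
  "ret R2 1 3 0"
  "bcnt R2 2 3 0 0 = 2"
  "bcnt R2 2 3 0 1 = 2"
  "ret R2 2 3 0"
  "bcnt R2 3 3 0 0 = 0"
  "bcnt R2 3 3 0 1 = 4"
  "ret R2 3 3 0"
  "bcnt R2 4 3 0 0 = 3"
  "bcnt R2 4 3 0 1 = 1"
  "ret R2 4 3 0"
  by (simp_all add: bcnt_def ret_def tourl_num bstep_def R2_def R_def sb_def)

lemma ok_0_3: "Bok R 0 3 \<and> Bok R2 0 3 \<and> Brel 0 3"
  unfolding Bok_def Brel_def
  apply (intro conjI exI[of _ 0])
  apply (simp_all only: all5)
  apply (simp_all add: facts_R_0_3 facts_R2_0_3 facts_R_0_3[simplified One_nat_def] facts_R2_0_3[simplified One_nat_def])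
  done

lemma facts_R_0_4:
  "bcnt R 0 4 0 0 = 1"
  "bcnt R 0 4 0 1 = 3"
  "ret R 0 4 0"
  "bcnt R 1 4 0 0 = 2"
  "bcnt R 1 4 0 1 = 2"
  "ret R 1 4 0"
  "bcnt R 2 4 0 0 = 3"
  "bcnt R 2 4 0 1 = 1"
  "ret R 2 4 0"
  "bcnt R 3 4 0 0 = 4"
  "bcnt R 3 4 0 1 = 0"
  "ret R 3 4 0"
  "bcnt R 4 4 0 0 = 0"
  "bcnt R 4 4 0 1 = 4"
  "ret R 4 4 0"
  by (simp_all add: bcnt_def ret_def tourl_num bstep_def R_def sb_def)

lemma facts_R2_0_4:
  "bcnt R2 0 4 0 0 = 3"
  "bcnt R2 0 4 0 1 = 1"
  "ret R2 0 4 0"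
  "bcnt R2 1 4 0 0 = 1"
  "bcnt R2 1 4 0 1 = 3"
  "ret R2 1 4 0"
  "bcnt R2 2 4 0 0 = 4"
  "bcnt R2 2 4 0 1 = 0"
  "ret R2 2 4 0"
  "bcnt R2 3 4 0 0 = 2"
  "bcnt R2 3 4 0 1 = 2"
  "ret R2 3 4 0"
  "bcnt R2 4 4 0 0 = 0"
  "bcnt R2 4 4 0 1 = 4"
  "ret R2 4 4 0"
  by (simp_all add: bcnt_def ret_def tourl_num bstep_def R2_def R_def sb_def)

lemma ok_0_4: "Bok R 0 4 \<and> Bok R2 0 4 \<and> Brel 0 4"
  unfolding Bok_def Brel_def
  apply (intro conjI exI[of _ 0])
  apply (simp_all only: all5)
  apply (simp_all add: facts_R_0_4 facts_R2_0_4 facts_R_0_4[simplified One_nat_def] facts_R2_0_4[simplified One_nat_def])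
  done

lemma facts_R_1_0:
  "bcnt R 0 0 1 0 = 4"
  "bcnt R 0 0 1 1 = 0"
  "ret R 0 0 1"
  "bcnt R 1 0 1 0 = 3"
  "bcnt R 1 0 1 1 = 1"
  "ret R 1 0 1"
  "bcnt R 2 0 1 0 = 0"
  "bcnt R 2 0 1 1 = 4"
  "ret R 2 0 1"
  "bcnt R 3 0 1 0 = 2"
  "bcnt R 3 0 1 1 = 2"
  "ret R 3 0 1"
  "bcnt R 4 0 1 0 = 1"
  "bcnt R 4 0 1 1 = 3"
  "ret R 4 0 1"
  by (simp_all add: bcnt_def ret_def tourl_num bstep_def R_def sb_def)

lemma facts_R2_1_0:
  "bcnt R2 0 0 1 0 = 4"
  "bcnt R2 0 0 1 1 = 0"
  "ret R2 0 0 1"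
  "bcnt R2 1 0 1 0 = 1"
  "bcnt R2 1 0 1 1 = 3"
  "ret R2 1 0 1"
  "bcnt R2 2 0 1 0 = 2"
  "bcnt R2 2 0 1 1 = 2"
  "ret R2 2 0 1"
  "bcnt R2 3 0 1 0 = 3"
  "bcnt R2 3 0 1 1 = 1"
  "ret R2 3 0 1"
  "bcnt R2 4 0 1 0 = 0"
  "bcnt R2 4 0 1 1 = 4"
  "ret R2 4 0 1"
  by (simp_all add: bcnt_def ret_def tourl_num bstep_def R2_def R_def sb_def)

lemma ok_1_0: "Bok R 1 0 \<and> Bok R2 1 0 \<and> Brel 1 0"
  unfolding Bok_def Brel_def
  apply (intro conjI exI[of _ 2])
  apply (simp_all only: all5)
  apply (simp_all add: facts_R_1_0 facts_R2_1_0 facts_R_1_0[simplified One_nat_def] facts_R2_1_0[simplified One_nat_def])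
  done

lemma facts_R_1_1:
  "bcnt R 0 1 1 0 = 0"
  "bcnt R 0 1 1 1 = 4"
  "ret R 0 1 1"
  "bcnt R 1 1 1 0 = 4"
  "bcnt R 1 1 1 1 = 0"
  "ret R 1 1 1"
  "bcnt R 2 1 1 0 = 1"
  "bcnt R 2 1 1 1 = 3"
  "ret R 2 1 1"
  "bcnt R 3 1 1 0 = 3"
  "bcnt R 3 1 1 1 = 1"
  "ret R 3 1 1"
  "bcnt R 4 1 1 0 = 2"
  "bcnt R 4 1 1 1 = 2"
  "ret R 4 1 1"
  by (simp_all add: bcnt_def ret_def tourl_num bstep_def R_def sb_def)

lemma facts_R2_1_1:
  "bcnt R2 0 1 1 0 = 2"
  "bcnt R2 0 1 1 1 = 2"
  "ret R2 0 1 1"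
  "bcnt R2 1 1 1 0 = 4"
  "bcnt R2 1 1 1 1 = 0"
  "ret R2 1 1 1"
  "bcnt R2 2 1 1 0 = 0"
  "bcnt R2 2 1 1 1 = 4"
  "ret R2 2 1 1"
  "bcnt R2 3 1 1 0 = 1"
  "bcnt R2 3 1 1 1 = 3"
  "ret R2 3 1 1"
  "bcnt R2 4 1 1 0 = 3"
  "bcnt R2 4 1 1 1 = 1"
  "ret R2 4 1 1"
  by (simp_all add: bcnt_def ret_def tourl_num bstep_def R2_def R_def sb_def)

lemma ok_1_1: "Bok R 1 1 \<and> Bok R2 1 1 \<and> Brel 1 1"
  unfolding Bok_def Brel_def
  apply (intro conjI exI[of _ 2])
  apply (simp_all only: all5)
  apply (simp_all add: facts_R_1_1 facts_R2_1_1 facts_R_1_1[simplified One_nat_def] facts_R2_1_1[simplified One_nat_def])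
  done

lemma facts_R_1_2:
  "bcnt R 0 2 1 0 = 3"
  "bcnt R 0 2 1 1 = 1"
  "ret R 0 2 1"
  "bcnt R 1 2 1 0 = 2"
  "bcnt R 1 2 1 1 = 2"
  "ret R 1 2 1"
  "bcnt R 2 2 1 0 = 4"
  "bcnt R 2 2 1 1 = 0"
  "ret R 2 2 1"
  "bcnt R 3 2 1 0 = 1"
  "bcnt R 3 2 1 1 = 3"
  "ret R 3 2 1"
  "bcnt R 4 2 1 0 = 0"
  "bcnt R 4 2 1 1 = 4"
  "ret R 4 2 1"
  by (simp_all add: bcnt_def ret_def tourl_num bstep_def R_def sb_def)

lemma facts_R2_1_2:
  "bcnt R2 0 2 1 0 = 1"
  "bcnt R2 0 2 1 1 = 3"
  "ret R2 0 2 1"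
  "bcnt R2 1 2 1 0 = 3"
  "bcnt R2 1 2 1 1 = 1"
  "ret R2 1 2 1"
  "bcnt R2 2 2 1 0 = 4"
  "bcnt R2 2 2 1 1 = 0"
  "ret R2 2 2 1"
  "bcnt R2 3 2 1 0 = 0"
  "bcnt R2 3 2 1 1 = 4"
  "ret R2 3 2 1"
  "bcnt R2 4 2 1 0 = 2"
  "bcnt R2 4 2 1 1 = 2"
  "ret R2 4 2 1"
  by (simp_all add: bcnt_def ret_def tourl_num bstep_def R2_def R_def sb_def)

lemma ok_1_2: "Bok R 1 2 \<and> Bok R2 1 2 \<and> Brel 1 2"
  unfolding Bok_def Brel_def
  apply (intro conjI exI[of _ 2])
  apply (simp_all only: all5)
  apply (simp_all add: facts_R_1_2 facts_R2_1_2 facts_R_1_2[simplified One_nat_def] facts_R2_1_2[simplified One_nat_def])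
  done

lemma facts_R_1_3:
  "bcnt R 0 3 1 0 = 1"
  "bcnt R 0 3 1 1 = 3"
  "ret R 0 3 1"
  "bcnt R 1 3 1 0 = 0"
  "bcnt R 1 3 1 1 = 4"
  "ret R 1 3 1"
  "bcnt R 2 3 1 0 = 2"
  "bcnt R 2 3 1 1 = 2"
  "ret R 2 3 1"
  "bcnt R 3 3 1 0 = 4"
  "bcnt R 3 3 1 1 = 0"
  "ret R 3 3 1"
  "bcnt R 4 3 1 0 = 3"
  "bcnt R 4 3 1 1 = 1"
  "ret R 4 3 1"
  by (simp_all add: bcnt_def ret_def tourl_num bstep_def R_def sb_def)

lemma facts_R2_1_3:
  "bcnt R2 0 3 1 0 = 0"
  "bcnt R2 0 3 1 1 = 4"
  "ret R2 0 3 1"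
  "bcnt R2 1 3 1 0 = 2"
  "bcnt R2 1 3 1 1 = 2"
  "ret R2 1 3 1"
  "bcnt R2 2 3 1 0 = 3"
  "bcnt R2 2 3 1 1 = 1"
  "ret R2 2 3 1"
  "bcnt R2 3 3 1 0 = 4"
  "bcnt R2 3 3 1 1 = 0"
  "ret R2 3 3 1"
  "bcnt R2 4 3 1 0 = 1"
  "bcnt R2 4 3 1 1 = 3"
  "ret R2 4 3 1"
  by (simp_all add: bcnt_def ret_def tourl_num bstep_def R2_def R_def sb_def)

lemma ok_1_3: "Bok R 1 3 \<and> Bok R2 1 3 \<and> Brel 1 3"
  unfolding Bok_def Brel_def
  apply (intro conjI exI[of _ 2])
  apply (simp_all only: all5)
  apply (simp_all add: facts_R_1_3 facts_R2_1_3 facts_R_1_3[simplified One_nat_def] facts_R2_1_3[simplified One_nat_def])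
  done

lemma facts_R_1_4:
  "bcnt R 0 4 1 0 = 2"
  "bcnt R 0 4 1 1 = 2"
  "ret R 0 4 1"
  "bcnt R 1 4 1 0 = 1"
  "bcnt R 1 4 1 1 = 3"
  "ret R 1 4 1"
  "bcnt R 2 4 1 0 = 3"
  "bcnt R 2 4 1 1 = 1"
  "ret R 2 4 1"
  "bcnt R 3 4 1 0 = 0"
  "bcnt R 3 4 1 1 = 4"
  "ret R 3 4 1"
  "bcnt R 4 4 1 0 = 4"
  "bcnt R 4 4 1 1 = 0"
  "ret R 4 4 1"
  by (simp_all add: bcnt_def ret_def tourl_num bstep_def R_def sb_def)

lemma facts_R2_1_4:
  "bcnt R2 0 4 1 0 = 3"
  "bcnt R2 0 4 1 1 = 1"
  "ret R2 0 4 1"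
  "bcnt R2 1 4 1 0 = 0"
  "bcnt R2 1 4 1 1 = 4"
  "ret R2 1 4 1"
  "bcnt R2 2 4 1 0 = 1"
  "bcnt R2 2 4 1 1 = 3"
  "ret R2 2 4 1"
  "bcnt R2 3 4 1 0 = 2"
  "bcnt R2 3 4 1 1 = 2"
  "ret R2 3 4 1"
  "bcnt R2 4 4 1 0 = 4"
  "bcnt R2 4 4 1 1 = 0"
  "ret R2 4 4 1"
  by (simp_all add: bcnt_def ret_def tourl_num bstep_def R2_def R_def sb_def)

lemma ok_1_4: "Bok R 1 4 \<and> Bok R2 1 4 \<and> Brel 1 4"
  unfolding Bok_def Brel_def
  apply (intro conjI exI[of _ 2])
  apply (simp_all only: all5)
  apply (simp_all add: facts_R_1_4 facts_R2_1_4 facts_R_1_4[simplified One_nat_def] facts_R2_1_4[simplified One_nat_def])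
  done

definition E0 :: nat where "E0 = (SOME e. e \<in> {0..<5::nat})"

lemma E0_lt: "E0 < 5"
proof -
  have "(0::nat) \<in> {0..<5}" by simp
  then have "E0 \<in> {0..<5}" unfolding E0_def by (rule someI)
  then show ?thesis by simp
qed

lemma some_inc: "v \<in> {0,1} \<Longrightarrow> (SOME e. e \<in> inc G5 v) = E0"
  by (simp add: inc_G5 E0_def)

lemma ok_all: "v \<in> {0,1} \<Longrightarrow> e0 < 5 \<Longrightarrow> Bok R v e0 \<and> Bok R2 v e0 \<and> Brel v e0"
proof -
  assume v: "v \<in> {0,1}" and e: "e0 < 5"
  have "e0 \<in> {0,1,2,3,4}" using e by (auto simp: all5[of "\<lambda>x. x \<in> {0,1,2,3,4}", simplified])
  then show ?thesis using v
    ok_0_0 ok_0_1 ok_0_2 ok_0_3 ok_0_4 ok_1_0 ok_1_1 ok_1_2 ok_1_3 ok_1_4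
    by (elim insertE emptyE) simp_all
qed

lemma bstep_snd: "snd h \<in> {0,1} \<Longrightarrow> snd (bstep \<rho> t h) \<in> {0,1}"
  by (auto simp: bstep_def)

lemma bstep_pow_snd: "snd h \<in> {0,1} \<Longrightarrow> snd ((bstep \<rho> t ^^ n) h) \<in> {0,1}"
proof (induction n)
  case 0 then show ?case by simp
next
  case (Suc n) then show ?case using bstep_snd[of "(bstep \<rho> t ^^ n) h" \<rho> t] by simp
qed

lemma bern_step_G5: "snd h \<in> {0,1} \<Longrightarrow> bern_step G5 \<rho> {t} h = bstep \<rho> t h"
  unfolding bern_step_def bstep_def Let_def by (simp add: other_G5)

lemma tour_G5: "v \<in> {0,1} \<Longrightarrow> bern_tour G5 \<rho> v {t} n = (bstep \<rho> t ^^ n) (E0, v)"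
proof (induction n)
  case 0 then show ?case by (simp add: bern_tour_def some_inc)
next
  case (Suc n)
  have "snd ((bstep \<rho> t ^^ n) (E0, v)) \<in> {0,1}" using Suc.prems by (intro bstep_pow_snd) simp
  then show ?case using Suc by (simp add: bern_tour_def bern_step_G5 del: insert_iff)
qed

lemma tourl_map: "tourl \<rho> t h L = map (\<lambda>n. (bstep \<rho> t ^^ n) h) [0..<L]"
proof (induction L arbitrary: h)
  case 0 then show ?case by simp
next
  case (Suc L)
  show ?case unfolding map_upt_Suc using Suc by (simp add: funpow_Suc_right del: funpow.simps upt_Suc)
qed

lemma len_G5:
  assumes v: "v \<in> {0,1}" and r: "ret \<rho> t E0 v"
  shows "bern_len G5 \<rho> v {t} = 10"
proof -
  let ?f = "\<lambda>n. (bstep \<rho> t ^^ n) (E0, v)"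
  have l: "tourl \<rho> t (E0, v) 11 = map ?f [0..<11]" by (rule tourl_map)
  have a: "?f 10 = (E0, v)" using r unfolding ret_def Let_def l by simp
  have b: "(E0, v) \<notin> ?f ` {1..<10}" using r unfolding ret_def Let_def l
    by (simp add: map_tl[symmetric] take_map)
  show ?thesis unfolding bern_len_def tour_G5[OF v]
  proof (rule Least_equality)
    show "0 < (10::nat) \<and> ?f 10 = ?f 0" using a by simp
    fix y assume y: "0 < y \<and> ?f y = ?f 0"
    show "10 \<le> y"
    proof (rule ccontr)
      assume "\<not> 10 \<le> y"
      then have yi: "y \<in> {1..<10}" using y by auto
      have "?f y = (E0, v)" using y by simp
      then show False using b yi by (metis image_eqI)
    qed
  qed
qed

lemma cntl_card:
  "set vis = f ` {..<j} \<Longrightarrow> cntl t w vis (map f [j..<j+m]) =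
    card {n. j \<le> n \<and> n < j + m \<and> fst (f n) \<noteq> t \<and> snd (f n) = w \<and> (fst (f n), 1 - snd (f n)) \<notin> f ` {..<n}}"
proof (induction m arbitrary: j vis)
  case 0 then show ?case by simp
next
  case (Suc m)
  let ?Q = "\<lambda>n. fst (f n) \<noteq> t \<and> snd (f n) = w \<and> (fst (f n), 1 - snd (f n)) \<notin> f ` {..<n}"
  have l: "map f [j..<j + Suc m] = f j # map f [Suc j..<Suc j + m]"
    using upt_conv_Cons[of j "j + Suc m"] by (simp del: upt_Suc)
  have sv: "set (f j # vis) = f ` {..<Suc j}" using Suc.prems by (auto simp: lessThan_Suc)
  have IH: "cntl t w (f j # vis) (map f [Suc j..<Suc j + m]) = card {n. Suc j \<le> n \<and> n < Suc j + m \<and> ?Q n}"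
    by (rule Suc.IH[OF sv])
  have split: "{n. j \<le> n \<and> n < j + Suc m \<and> ?Q n} = (if ?Q j then {j} else {}) \<union> {n. Suc j \<le> n \<and> n < Suc j + m \<and> ?Q n}"
    by (auto simp: le_less Suc_le_eq)
  have card: "card {n. j \<le> n \<and> n < j + Suc m \<and> ?Q n} = (if ?Q j then 1 else 0) + card {n. Suc j \<le> n \<and> n < Suc j + m \<and> ?Q n}"
    unfolding split by (simp add: card_Un_disjoint)
  show ?case unfolding l card IH[symmetric] using Suc.prems by simp
qed

lemma bcnt_card: "bcnt \<rho> t e0 v w = card {n. n < 10 \<and> fst ((bstep \<rho> t ^^ n) (e0, v)) \<noteq> t \<and> snd ((bstep \<rho> t ^^ n) (e0, v)) = w \<and>
    (fst ((bstep \<rho> t ^^ n) (e0, v)), 1 - snd ((bstep \<rho> t ^^ n) (e0, v))) \<notin> (\<lambda>n. (bstep \<rho> t ^^ n) (e0, v)) ` {..<n}}"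
  unfolding bcnt_def tourl_map using cntl_card[where vis="[]" and f="\<lambda>n. (bstep \<rho> t ^^ n) (e0, v)" and j=0 and t=t and w=w and m=10] by simp

lemma bcnt_out:
  assumes "v \<in> {0,1}" "w \<notin> {0,1}"
  shows "bcnt \<rho> t e0 v w = 0"
proof -
  have "snd ((bstep \<rho> t ^^ n) (e0, v)) \<in> {0,1}" for n using assms(1) by (intro bstep_pow_snd) simp
  then have "snd ((bstep \<rho> t ^^ n) (e0, v)) \<noteq> w" for n using assms(2) by metis
  then show ?thesis unfolding bcnt_card by simp
qed

lemma div_G5:
  assumes v: "v \<in> {0,1}" and r: "ret \<rho> t E0 v"
  shows "bern_div G5 \<rho> v {t} w = int (bcnt \<rho> t E0 v w)"
proof -
  have s: "snd ((bstep \<rho> t ^^ n) (E0, v)) \<in> {0,1}" for n using v by (intro bstep_pow_snd) simp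
  show ?thesis
    unfolding bern_div_def len_G5[OF v r] tour_G5[OF v] bcnt_card Let_def
    using s by (simp add: other_G5 singleton_iff del: insert_iff)
qed

lemma bern_G5:
  fixes \<rho> :: "nat \<Rightarrow> nat \<Rightarrow> nat"
  assumes v: "v \<in> {0,1}" and t: "t < 5" and t': "t' < 5" and ok: "Bok \<rho> v E0"
    and m: "(int (bcnt \<rho> t' E0 v 0) - int (bcnt \<rho> t E0 v 0)) mod 5 = k mod 5"
  shows "bernardi G5 \<rho> v (P k) {t} = {t'}"
proof -
  let ?X = "\<lambda>a. bcnt \<rho> a E0 v"
  have r: "\<forall>a<5. ret \<rho> a E0 v" using ok unfolding Bok_def by blast
  have deg: "\<forall>a<5. ?X a 0 + ?X a 1 = 4" using ok unfolding Bok_def by blast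
  have inj: "\<forall>a<5. \<forall>b<5. ?X a 0 mod 5 = ?X b 0 mod 5 \<longrightarrow> a = b" using ok unfolding Bok_def by blast
  have bd: "bern_div G5 \<rho> v {a} w = (if w \<in> {0,1} then int (?X a w) else 0)" if "a < 5" for a w
  proof (cases "w \<in> {0,1}")
    case True then show ?thesis using div_G5[OF v] r that by simp
  next
    case False then show ?thesis using div_G5[OF v] r that bcnt_out[OF v False] by simp
  qed
  have inP: "(\<lambda>w. bern_div G5 \<rho> v {a} w - bern_div G5 \<rho> v {t} w) \<in> P k \<longleftrightarrow>
      (int (?X a 0) - int (?X t 0)) mod 5 = k mod 5" if a: "a < 5" for a
  proof -
    have d1: "int (?X a 0) + int (?X a 1) = 4" using deg a by (metis of_nat_add of_nat_numeral)
    have d2: "int (?X t 0) + int (?X t 1) = 4" using deg t by (metis of_nat_add of_nat_numeral)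
    have "(\<lambda>w. bern_div G5 \<rho> v {a} w - bern_div G5 \<rho> v {t} w) 0 + (\<lambda>w. bern_div G5 \<rho> v {a} w - bern_div G5 \<rho> v {t} w) 1 = 0"
      using bd[OF a] bd[OF t] d1 d2 by simp
    moreover have "\<forall>w. w \<notin> {0,1} \<longrightarrow> (\<lambda>w. bern_div G5 \<rho> v {a} w - bern_div G5 \<rho> v {t} w) w = 0"
      using bd[OF a] bd[OF t] by simp
    moreover have "(\<lambda>w. bern_div G5 \<rho> v {a} w - bern_div G5 \<rho> v {t} w) 0 = int (?X a 0) - int (?X t 0)"
      using bd[OF a] bd[OF t] by simp
    ultimately show ?thesis unfolding P_def by simp
  qed
  show ?thesis unfolding bernardi_def
  proof (rule the_equality)
    show "{t'} \<in> spanning_trees G5 \<and> (\<lambda>w. bern_div G5 \<rho> v {t'} w - bern_div G5 \<rho> v {t} w) \<in> P k"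
      using st_G5 t' inP[OF t'] m by auto
  next
    fix T' assume A: "T' \<in> spanning_trees G5 \<and> (\<lambda>w. bern_div G5 \<rho> v T' w - bern_div G5 \<rho> v {t} w) \<in> P k"
    then obtain a where a: "T' = {a}" "a < 5" by (auto simp: st_G5)
    then have "(int (?X a 0) - int (?X t 0)) mod 5 = k mod 5" using A inP by auto
    with m have "(int (?X a 0) - int (?X t 0)) mod 5 = (int (?X t' 0) - int (?X t 0)) mod 5" by simp
    then have "(int (?X a 0) - int (?X t 0) + int (?X t 0)) mod 5 = (int (?X t' 0) - int (?X t 0) + int (?X t 0)) mod 5"
      by (rule mod_add_cong) simp
    then have "int (?X a 0) mod 5 = int (?X t' 0) mod 5" by simp
    then have "int (?X a 0 mod 5) = int (?X t' 0 mod 5)" by (simp add: of_nat_mod)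
    then have "?X a 0 mod 5 = ?X t' 0 mod 5" by simp
    then have "a = t'" using inj a t' by blast
    then show "T' = {t'}" using a by simp
  qed
qed

lemma bern_exists:
  fixes \<rho> :: "nat \<Rightarrow> nat \<Rightarrow> nat"
  assumes ok: "Bok \<rho> v E0" and t: "t < 5"
  shows "\<exists>a<5. (int (bcnt \<rho> a E0 v 0) - int (bcnt \<rho> t E0 v 0)) mod 5 = k mod 5"
proof -
  let ?g = "\<lambda>a. bcnt \<rho> a E0 v 0 mod 5"
  let ?y = "(int (bcnt \<rho> t E0 v 0) + k) mod 5"
  have I: "\<forall>a<5. \<forall>b<5. ?g a = ?g b \<longrightarrow> a = b" using ok unfolding Bok_def by blast
  have inj: "inj_on ?g {0..<5}"
  proof (rule inj_onI)
    fix a b assume "a \<in> {0..<5}" "b \<in> {0..<5}" "?g a = ?g b"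
    moreover then have "a < 5" "b < 5" by simp_all
    ultimately show "a = b" using I by blast
  qed
  have sub: "?g ` {0..<5} \<subseteq> {0..<5}" by auto
  have im: "?g ` {0..<5} = {0..<5}" using endo_inj_surj[OF _ sub inj] by simp
  have y0: "0 \<le> ?y" and y5: "?y < 5" by simp_all
  then have "nat ?y < 5" by (simp add: nat_less_iff)
  then have "nat ?y \<in> ?g ` {0..<5}" unfolding im by simp
  then obtain a where a0: "a \<in> {0..<5}" and a1: "nat ?y = ?g a" by (rule imageE)
  have "int (?g a) = ?y" using a1 y0 by simp
  then have "int (bcnt \<rho> a E0 v 0) mod 5 = ?y" by (simp add: of_nat_mod)
  then have "(int (bcnt \<rho> a E0 v 0) - int (bcnt \<rho> t E0 v 0)) mod 5 = ((int (bcnt \<rho> t E0 v 0) + k) - int (bcnt \<rho> t E0 v 0)) mod 5"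
    by (rule mod_diff_cong) simp
  then have "(int (bcnt \<rho> a E0 v 0) - int (bcnt \<rho> t E0 v 0)) mod 5 = k mod 5" by simp
  then show ?thesis using a0 by auto
qed

lemma R_per:
  assumes u: "u \<in> {0,1}" and t: "t < 5"
  shows "(R u ^^ 5) t = t"
proof -
  have a: "\<forall>t<5. (R 0 ^^ 5) t = t" by (simp only: all5; simp add: funpow_num R_def sb_def)
  have b: "\<forall>t<5. (R 1 ^^ 5) t = t" by (simp only: all5; simp add: funpow_num R_def sb_def)
  show ?thesis using u t a b by auto
qed

lemma R2_pow: "(R2 u ^^ n) = (R u ^^ (2 * n))"
proof -
  have "R2 u = R u ^^ 2" by (simp add: fun_eq_iff R2_def numeral_2_eq_2)
  then show ?thesis by (simp add: funpow_mult mult.commute)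
qed

lemma ar: "(2 * nat ((3 * s) mod 5)) mod 5 = nat (s mod (5::int))"
proof -
  have "int ((2 * nat ((3 * s) mod 5)) mod 5) = (2 * ((3 * s) mod 5)) mod 5" by (simp add: of_nat_mod)
  also have "\<dots> = (2 * (3 * s)) mod 5" by (simp add: mod_mult_right_eq)
  also have "2 * (3 * s) = s + s * 5" by simp
  also have "(s + s * 5) mod 5 = s mod 5" by (rule mod_mult_self1)
  finally show ?thesis by simp
qed

lemma rotor_main:
  assumes v: "v \<in> {0,1}" and t: "t < 5"
  shows "rotor_routing G5 R v (P k) {t} = rotor_routing G5 R2 v (P (3 * k)) {t}"
proof -
  let ?u = "1 - v"
  let ?s = "if v = 1 then k else - k"
  have u: "?u \<in> {0,1}" using v by auto
  have per: "(R ?u ^^ 5) t = t" by (rule R_per[OF u t])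
  have per2: "(R2 ?u ^^ 5) t = t"
    using funpow_mod_eq[where f="R ?u" and m=10 and n=5 and x=t, OF per] by (simp add: R2_pow)
  have s3: "(if v = 1 then 3 * k else - (3 * k)) = 3 * ?s" by simp
  have "rotor_routing G5 R2 v (P (3 * k)) {t} = {(R2 ?u ^^ nat ((3 * ?s) mod 5)) t}"
    using rotor_G5[where \<rho>=R2 and v=v and t=t and k="3 * k", OF v per2] s3 by simp
  also have "(R2 ?u ^^ nat ((3 * ?s) mod 5)) t = (R ?u ^^ ((2 * nat ((3 * ?s) mod 5)) mod 5)) t"
    unfolding R2_pow by (rule funpow_mod_eq[OF per, symmetric])
  also have "(2 * nat ((3 * ?s) mod 5)) mod 5 = nat (?s mod 5)" by (rule ar)
  finally show ?thesis using rotor_G5[where \<rho>=R and v=v and t=t and k=k, OF v per] by simp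
qed

lemma bern_main:
  assumes v: "v \<in> {0,1}" and t: "t < 5"
  shows "bernardi G5 R v (P k) {t} = bernardi G5 R2 v (P (3 * k)) {t}"
proof -
  have ok: "Bok R v E0" "Bok R2 v E0" "Brel v E0" using ok_all[OF v E0_lt] by auto
  obtain c where c: "\<forall>a<5. int (bcnt R2 a E0 v 0) mod 5 = (3 * int (bcnt R a E0 v 0) + c) mod 5"
    using ok(3) unfolding Brel_def by blast
  obtain a where a: "a < 5" and m: "(int (bcnt R a E0 v 0) - int (bcnt R t E0 v 0)) mod 5 = k mod 5"
    using bern_exists[OF ok(1) t] by blast
  have "(int (bcnt R2 a E0 v 0) - int (bcnt R2 t E0 v 0)) mod 5 =
      ((3 * int (bcnt R a E0 v 0) + c) - (3 * int (bcnt R t E0 v 0) + c)) mod 5"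
    using c a t by (intro mod_diff_cong) simp_all
  also have "\<dots> = (3 * (int (bcnt R a E0 v 0) - int (bcnt R t E0 v 0))) mod 5" by (simp add: algebra_simps)
  also have "\<dots> = (3 * k) mod 5" using m by (metis mod_mult_right_eq)
  finally have m2: "(int (bcnt R2 a E0 v 0) - int (bcnt R2 t E0 v 0)) mod 5 = (3 * k) mod 5" .
  show ?thesis using bern_G5[OF v t a ok(1) m] bern_G5[OF v t a ok(2) m2] by simp
qed

theorem theorem1p5:
  fixes \<alpha> :: torsor_kind
  shows "\<exists>(G :: (nat, nat) mgraph) \<rho> (G' :: (nat, nat) mgraph) \<rho>' \<phi> \<gamma>.
     ribbon_graph G \<rho> \<and> ribbon_graph G' \<rho>' \<and> verts G = verts G' \<and>
     bij_betw \<phi> (spanning_trees G) (spanning_trees G') \<and>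
     \<gamma> \<in> iso (Pic0 G) (Pic0 G') \<and>
     (\<forall>v\<in>verts G. \<forall>S\<in>carrier (Pic0 G). \<forall>T\<in>spanning_trees G.
        \<phi> (torsor \<alpha> G \<rho> v S T) = torsor \<alpha> G' \<rho>' v (\<gamma> S) (\<phi> T)) \<and>
     genus G \<rho> \<noteq> genus G' \<rho>'"
proof -
  have main: "\<forall>v\<in>verts G5. \<forall>S\<in>carrier (Pic0 G5). \<forall>T\<in>spanning_trees G5.
        id (torsor \<alpha> G5 R v S T) = torsor \<alpha> G5 R2 v (\<gamma>5 S) (id T)"
  proof (intro ballI)
    fix v S T assume v: "v \<in> verts G5" and S: "S \<in> carrier (Pic0 G5)" and T: "T \<in> spanning_trees G5"
    have v': "v \<in> {0,1}" using v by simp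
    obtain k where k: "S = P k" using S unfolding carrier_Pic0 by blast
    obtain t where t: "T = {t}" "t < 5" using T unfolding st_G5 by blast
    have g: "\<gamma>5 S = P (3 * k)" using k gamma_P by simp
    show "id (torsor \<alpha> G5 R v S T) = torsor \<alpha> G5 R2 v (\<gamma>5 S) (id T)"
    proof (cases \<alpha>)
      case RotorRouting
      then show ?thesis using rotor_main[OF v' t(2), of k] k g t(1) by simp
    next
      case Bernardi
      then show ?thesis using bern_main[OF v' t(2), of k] k g t(1) by simp
    qed
  qed
  have "ribbon_graph G5 R \<and> ribbon_graph G5 R2 \<and> verts G5 = verts G5 \<and>
     bij_betw id (spanning_trees G5) (spanning_trees G5) \<and>
     \<gamma>5 \<in> iso (Pic0 G5) (Pic0 G5) \<and>
     (\<forall>v\<in>verts G5. \<forall>S\<in>carrier (Pic0 G5). \<forall>T\<in>spanning_trees G5.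
        id (torsor \<alpha> G5 R v S T) = torsor \<alpha> G5 R2 v (\<gamma>5 S) (id T)) \<and>
     genus G5 R \<noteq> genus G5 R2"
    using ribbon_R ribbon_R2 gamma_iso main genus_diff by (simp add: bij_betw_id)
  then show ?thesis by blast
qed

end
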